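(* Let $\mathcal{G}$ be a hereditary graph class such that $\omega_{\mathcal{G}}:=\max_{H\in\mathcal{G}} mw(H)$ exists. Then for any graph $G$, $mw(G)\le\max(\mathcal{G}\text{-}mc(G),\ \omega_{\mathcal{G}})$.
   Context: A graph class is a set of graphs containing at least one non-empty graph; it is hereditary if it is closed under taking induced subgraphs. A module of $G$ is a vertex set $M$ such that every vertex outside $M$ is adjacent to all or none of $M$. A $\mathcal{G}$-modular partition of $G$ is a partition of $V(G)$ into modules $M$ with $G[M]\in\mathcal{G}$, and $\mathcal{G}\text{-}mc(G)$ is the minimum size of such a partition. The modular-width $mw(G)$ is the maximum number of children of a prime node in the modular decomposition tree of $G$ (the inclusion tree of strong modules, where a node for module $M$ is prime if both $G[M]$ and its complement are connected), and $0$ if there is no prime node. *)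

theory Defs
  imports Main "HOL-Library.Disjoint_Sets"
begin

type_synonym 'a graph = "'a set \<times> ('a \<Rightarrow> 'a \<Rightarrow> bool)"

definition verts :: "'a graph \<Rightarrow> 'a set" where "verts G = fst G"
definition adj :: "'a graph \<Rightarrow> 'a \<Rightarrow> 'a \<Rightarrow> bool" where "adj G = snd G"

definition wf_graph :: "'a graph \<Rightarrow> bool" where
  "wf_graph G \<longleftrightarrow> finite (verts G) \<and>
     (\<forall>u v. adj G u v \<longrightarrow> u \<in> verts G \<and> v \<in> verts G \<and> u \<noteq> v) \<and>
     (\<forall>u v. adj G u v \<longrightarrow> adj G v u)"

definition induced :: "'a graph \<Rightarrow> 'a set \<Rightarrow> 'a graph" where
  "induced G S = (S, \<lambda>u v. u \<in> S \<and> v \<in> S \<and> adj G u v)"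

definition complement :: "'a graph \<Rightarrow> 'a graph" where
  "complement G = (verts G, \<lambda>u v. u \<in> verts G \<and> v \<in> verts G \<and> u \<noteq> v \<and> \<not> adj G u v)"

definition connected_graph :: "'a graph \<Rightarrow> bool" where
  "connected_graph G \<longleftrightarrow> verts G \<noteq> {} \<and>
     (\<forall>x\<in>verts G. \<forall>y\<in>verts G. (adj G)\<^sup>*\<^sup>* x y)"

definition graph_iso :: "'a graph \<Rightarrow> 'a graph \<Rightarrow> bool" where
  "graph_iso G H \<longleftrightarrow> (\<exists>f. bij_betw f (verts G) (verts H) \<and>
     (\<forall>u\<in>verts G. \<forall>v\<in>verts G. adj G u v \<longleftrightarrow> adj H (f u) (f v)))"

definition graph_class :: "'a graph set \<Rightarrow> bool" where
  "graph_class C \<longleftrightarrow> (\<forall>H\<in>C. wf_graph H) \<and> (\<exists>H\<in>C. verts H \<noteq> {}) \<and>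
     (\<forall>H\<in>C. \<forall>H'. wf_graph H' \<and> graph_iso H H' \<longrightarrow> H' \<in> C)"

definition hereditary :: "'a graph set \<Rightarrow> bool" where
  "hereditary C \<longleftrightarrow> graph_class C \<and> (\<forall>H\<in>C. \<forall>S. S \<subseteq> verts H \<longrightarrow> induced H S \<in> C)"

definition module :: "'a graph \<Rightarrow> 'a set \<Rightarrow> bool" where
  "module G M \<longleftrightarrow> M \<subseteq> verts G \<and>
     (\<forall>x\<in>verts G - M. (\<forall>y\<in>M. adj G x y) \<or> (\<forall>y\<in>M. \<not> adj G x y))"

definition strong_module :: "'a graph \<Rightarrow> 'a set \<Rightarrow> bool" where
  "strong_module G M \<longleftrightarrow> module G M \<and> M \<noteq> {} \<and>
     (\<forall>N. module G N \<longrightarrow> N \<inter> M = {} \<or> N \<subseteq> M \<or> M \<subseteq> N)"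

text \<open>Children of a node in the modular decomposition tree (the inclusion
tree of strong modules).\<close>
definition md_children :: "'a graph \<Rightarrow> 'a set \<Rightarrow> 'a set set" where
  "md_children G M = {N. strong_module G N \<and> N \<subset> M \<and>
      \<not> (\<exists>N'. strong_module G N' \<and> N \<subset> N' \<and> N' \<subset> M)}"

definition prime_node :: "'a graph \<Rightarrow> 'a set \<Rightarrow> bool" where
  "prime_node G M \<longleftrightarrow> strong_module G M \<and>
     connected_graph (induced G M) \<and> connected_graph (complement (induced G M))"

definition mw :: "'a graph \<Rightarrow> nat" where
  "mw G = Max ({card (md_children G M) | M. prime_node G M} \<union> {0})"

definition modular_partition :: "'a graph set \<Rightarrow> 'a graph \<Rightarrow> 'a set set \<Rightarrow> bool" where
  "modular_partition C G P \<longleftrightarrow> partition_on (verts G) P \<and>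
     (\<forall>M\<in>P. module G M \<and> induced G M \<in> C)"

definition mc :: "'a graph set \<Rightarrow> 'a graph \<Rightarrow> nat" where
  "mc C G = (LEAST n. \<exists>P. modular_partition C G P \<and> card P = n)"

end

theory Submission imports Defs begin

lemma verts_induced[simp]: "verts (induced G S) = S" by (simp add: induced_def verts_def)
lemma adj_induced[simp]: "adj (induced G S) u v = (u \<in> S \<and> v \<in> S \<and> adj G u v)"
  by (simp add: induced_def adj_def)

lemma induced_induced: "M \<subseteq> X \<Longrightarrow> induced (induced G X) M = induced G M"
  by (auto simp: induced_def adj_def fun_eq_iff)

lemma module_unif: "module G M \<Longrightarrow> x \<in> verts G \<Longrightarrow> x \<notin> M \<Longrightarrow> y \<in> M \<Longrightarrow> y' \<in> M \<Longrightarrow> adj G x y = adj G x y'"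
  unfolding module_def by blast

lemma module_sub: "module G M \<Longrightarrow> M \<subseteq> verts G" unfolding module_def by blast

lemma module_inter: "module G A \<Longrightarrow> module G B \<Longrightarrow> module G (A \<inter> B)"
  unfolding module_def by blast

lemma module_union: "module G A \<Longrightarrow> module G B \<Longrightarrow> A \<inter> B \<noteq> {} \<Longrightarrow> module G (A \<union> B)"
  unfolding module_def by blast

lemma L1: "module G N \<Longrightarrow> N \<subseteq> M \<Longrightarrow> M \<subseteq> verts G \<Longrightarrow> module (induced G M) N"
  unfolding module_def by (simp, blast)

lemma L2: assumes "module (induced G M) N" "module G M" shows "module G N"
  unfolding module_def
proof (intro conjI ballI)
  have NM: "N \<subseteq> M" using module_sub[OF assms(1)] by simp
  then show "N \<subseteq> verts G" using module_sub[OF assms(2)] by blast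
  fix x assume x: "x \<in> verts G - N"
  show "(\<forall>y\<in>N. adj G x y) \<or> (\<forall>y\<in>N. \<not> adj G x y)"
  proof (cases "x \<in> M")
    case True
    then have "x \<in> verts (induced G M) - N" using x by simp
    then have "(\<forall>y\<in>N. adj (induced G M) x y) \<or> (\<forall>y\<in>N. \<not> adj (induced G M) x y)"
      using assms(1) unfolding module_def by blast
    then show ?thesis using NM True by auto
  next
    case False
    then show ?thesis using assms(2) x NM unfolding module_def by blast
  qed
qed

lemma L4a: assumes "strong_module G M" "N \<subseteq> M" "strong_module (induced G M) N"
  shows "strong_module G N"
proof -
  have mM: "module G M" using assms(1) strong_module_def by blast
  have mN: "module G N" using L2 assms(3) mM strong_module_def by blast
  show ?thesis unfolding strong_module_def
  proof (intro conjI allI impI)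
    show "module G N" by fact
    show "N \<noteq> {}" using assms(3) strong_module_def by blast
    fix N' assume mN': "module G N'"
    show "N' \<inter> N = {} \<or> N' \<subseteq> N \<or> N \<subseteq> N'"
    proof (cases "N' \<inter> N = {}")
      case False
      have "module (induced G M) (N' \<inter> M)" using L1 module_inter[OF mN' mM] module_sub[OF mM] by blast
      then have "N' \<inter> M \<inter> N = {} \<or> N' \<inter> M \<subseteq> N \<or> N \<subseteq> N' \<inter> M"
        using assms(3) unfolding strong_module_def by blast
      moreover have "N' \<inter> M \<noteq> {}" using False assms(2) by blast
      then have "N' \<subseteq> M \<or> M \<subseteq> N'" using assms(1) mN' unfolding strong_module_def by blast
      ultimately show ?thesis using False assms(2) by blast
    qed simp
  qed
qed

lemma L4b: assumes "strong_module G M" "N \<subseteq> M" "strong_module G N"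
  shows "strong_module (induced G M) N"
proof -
  have mM: "module G M" using assms(1) strong_module_def by blast
  show ?thesis unfolding strong_module_def
  proof (intro conjI allI impI)
    show "module (induced G M) N" using L1 assms(2,3) module_sub[OF mM] strong_module_def by blast
    show "N \<noteq> {}" using assms(3) strong_module_def by blast
    fix N' assume "module (induced G M) N'"
    then have "module G N'" using L2[OF _ mM] by blast
    then show "N' \<inter> N = {} \<or> N' \<subseteq> N \<or> N \<subseteq> N'" using assms(3) strong_module_def by blast
  qed
qed

lemma children_induced: assumes "strong_module G M"
  shows "md_children (induced G M) M = md_children G M"
  unfolding md_children_def using L4a[OF assms] L4b[OF assms]
  by (metis (no_types, lifting) order.strict_implies_order order.strict_trans)

lemma prime_induced: assumes "prime_node G M" shows "prime_node (induced G M) M"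
  using assms L4b[of G M M] induced_induced[of M M G] unfolding prime_node_def by auto

lemma fin_mw: "finite (verts H) \<Longrightarrow> finite {card (md_children H M) | M. prime_node H M}"
proof -
  assume f: "finite (verts H)"
  have "{card (md_children H M) | M. prime_node H M} \<subseteq> (\<lambda>M. card (md_children H M)) ` Pow (verts H)"
    unfolding prime_node_def strong_module_def module_def by auto
  then show ?thesis using f finite_subset by blast
qed

lemma mw_ge: "finite (verts H) \<Longrightarrow> prime_node H M \<Longrightarrow> card (md_children H M) \<le> mw H"
  unfolding mw_def using fin_mw[of H] by (intro Max_ge) auto

lemma verts_compl[simp]: "verts (complement G) = verts G" by (simp add: complement_def verts_def)
lemma adj_compl[simp]: "adj (complement G) u v = (u \<in> verts G \<and> v \<in> verts G \<and> u \<noteq> v \<and> \<not> adj G u v)"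
  by (simp add: complement_def adj_def verts_def)

lemma reach_closed: "R\<^sup>*\<^sup>* x y \<Longrightarrow> x \<in> A \<Longrightarrow> (\<forall>u w. u \<in> A \<longrightarrow> R u w \<longrightarrow> w \<in> A) \<Longrightarrow> y \<in> A"
  by (induction rule: rtranclp_induct) auto

lemma overlap_not_prime:
  assumes wf: "wf_graph G" and mY: "module G Y" and mZ: "module G Z" and MU: "Y \<union> Z = M"
    and a: "a \<in> Y - Z" and b: "b \<in> Z - Y" and i: "i \<in> Y \<inter> Z"
    and c1: "connected_graph (induced G M)" and c2: "connected_graph (complement (induced G M))"
  shows False
proof -
  have V: "M \<subseteq> verts G" using module_sub[OF mY] module_sub[OF mZ] MU by blast
  have sym: "\<And>u v. adj G u v = adj G v u" using wf unfolding wf_graph_def by blast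
  define c where "c = adj G a i"
  have key: "adj G u w = c" if u: "u \<in> Y - Z" and w: "w \<in> Z" for u w
  proof -
    have "adj G u w = adj G u b" using module_unif[OF mZ, of u w b] u w b V MU by blast
    also have "\<dots> = adj G b u" using sym by blast
    also have "\<dots> = adj G b a" using module_unif[OF mY, of b u a] u a b V MU by blast
    also have "\<dots> = adj G a b" using sym by blast
    also have "\<dots> = adj G a i" using module_unif[OF mZ, of a b i] a b i V MU by blast
    finally show ?thesis unfolding c_def .
  qed
  have aM: "a \<in> M" "b \<in> M" using a b MU by auto
  show False
  proof (cases c)
    case False
    have "(adj (induced G M))\<^sup>*\<^sup>* a b" using c1 aM unfolding connected_graph_def by simp
    moreover have "\<forall>u w. u \<in> Y - Z \<longrightarrow> adj (induced G M) u w \<longrightarrow> w \<in> Y - Z"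
    proof (intro allI impI)
      fix u w assume u: "u \<in> Y - Z" and e: "adj (induced G M) u w"
      then have "w \<in> M" "adj G u w" by auto
      then show "w \<in> Y - Z" using key[OF u, of w] False MU by blast
    qed
    ultimately have "b \<in> Y - Z" using reach_closed[of _ a b "Y - Z"] a by blast
    then show False using b by blast
  next
    case True
    have "(adj (complement (induced G M)))\<^sup>*\<^sup>* a b" using c2 aM unfolding connected_graph_def by simp
    moreover have "\<forall>u w. u \<in> Y - Z \<longrightarrow> adj (complement (induced G M)) u w \<longrightarrow> w \<in> Y - Z"
    proof (intro allI impI)
      fix u w assume u: "u \<in> Y - Z" and e: "adj (complement (induced G M)) u w"
      then have "w \<in> M" "\<not> adj G u w" by auto
      then show "w \<in> Y - Z" using key[OF u, of w] True MU by blast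
    qed
    ultimately have "b \<in> Y - Z" using reach_closed[of _ a b "Y - Z"] a by blast
    then show False using b by blast
  qed
qed

lemma strongD: "strong_module G M \<Longrightarrow> module G N \<Longrightarrow> N \<inter> M = {} \<or> N \<subseteq> M \<or> M \<subseteq> N"
  unfolding strong_module_def by blast
lemma strong_mod: "strong_module G M \<Longrightarrow> module G M"
  unfolding strong_module_def by blast
lemma strong_ne: "strong_module G M \<Longrightarrow> M \<noteq> {}"
  unfolding strong_module_def by blast
lemma prime_strong: "prime_node G M \<Longrightarrow> strong_module G M"
  unfolding prime_node_def by blast
lemma prime_conn: "prime_node G M \<Longrightarrow> connected_graph (induced G M)"
  "prime_node G M \<Longrightarrow> connected_graph (complement (induced G M))"
  unfolding prime_node_def by blast+
lemma md_childrenI: "strong_module G N \<Longrightarrow> N \<subset> M \<Longrightarrow> (\<And>N'. strong_module G N' \<Longrightarrow> \<not> (N \<subset> N' \<and> N' \<subset> M)) \<Longrightarrow> N \<in> md_children G M"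
  unfolding md_children_def by blast
lemma md_childrenD: "N \<in> md_children G M \<Longrightarrow> strong_module G N \<and> N \<subset> M"
  "N \<in> md_children G M \<Longrightarrow> strong_module G N' \<Longrightarrow> \<not> (N \<subset> N' \<and> N' \<subset> M)"
  unfolding md_children_def by blast+

lemma in_child:
  assumes wf: "wf_graph G" and pM: "prime_node G M" and mX: "module G X" and ne: "X \<noteq> {}" and XM: "X \<subset> M"
  shows "\<exists>c\<in>md_children G M. X \<subseteq> c"
proof -
  have sM: "strong_module G M" using prime_strong[OF pM] .
  have V: "M \<subseteq> verts G" using module_sub[OF strong_mod[OF sM]] .
  have finV: "finite (verts G)" using wf unfolding wf_graph_def by blast
  define S where "S = {Y. module G Y \<and> X \<subseteq> Y \<and> Y \<subset> M}"
  have "S \<subseteq> Pow (verts G)" using V unfolding S_def by auto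
  then have finS: "finite S" using finV finite_subset by blast
  have XS: "X \<in> S" using mX XM S_def by blast
  then have "Max (card ` S) \<in> card ` S" using finS by (intro Max_in) auto
  then obtain Y where YS: "Y \<in> S" and Ymax: "card Y = Max (card ` S)" by auto
  have Ymx: "\<And>Y'. Y' \<in> S \<Longrightarrow> card Y' \<le> card Y" using Ymax finS by simp
  have mY: "module G Y" and XY: "X \<subseteq> Y" and YM: "Y \<subset> M" using YS S_def by auto
  have finM: "finite M" using V finV finite_subset by blast
  have bigger: "\<not> (Y \<subset> N \<and> N \<subset> M)" if "module G N" for N
  proof
    assume h: "Y \<subset> N \<and> N \<subset> M"
    then have "N \<in> S" using that XY S_def by auto
    moreover have "card Y < card N" using h finM by (meson psubset_card_mono finite_subset psubset_imp_subset)
    ultimately show False using Ymx by fastforce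
  qed
  have strY: "strong_module G Y" unfolding strong_module_def
  proof (intro conjI allI impI)
    show "module G Y" by fact
    show "Y \<noteq> {}" using XY ne by blast
    fix Z assume mZ: "module G Z"
    show "Z \<inter> Y = {} \<or> Z \<subseteq> Y \<or> Y \<subseteq> Z"
    proof (rule ccontr)
      assume ov: "\<not> ?thesis"
      then have "Z \<inter> M \<noteq> {}" using YM by blast
      then have "Z \<subseteq> M \<or> M \<subseteq> Z" using strongD[OF sM mZ] by blast
      then have ZM: "Z \<subseteq> M" using ov YM by blast
      have mU: "module G (Y \<union> Z)" using module_union[OF mY mZ] ov by blast
      have "\<not> (Y \<subset> Y \<union> Z \<and> Y \<union> Z \<subset> M)" using bigger[OF mU] .
      then have U: "Y \<union> Z = M" using ov ZM YM by blast
      obtain a b i where "a \<in> Y - Z" "b \<in> Z - Y" "i \<in> Y \<inter> Z" using ov by blast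
      then show False using overlap_not_prime[OF wf mY mZ U _ _ _ prime_conn[OF pM]] by blast
    qed
  qed
  have "Y \<in> md_children G M"
  proof (rule md_childrenI[OF strY YM])
    fix N' assume "strong_module G N'"
    then show "\<not> (Y \<subset> N' \<and> N' \<subset> M)" using bigger strong_mod by blast
  qed
  then show ?thesis using XY by blast
qed

lemma singleton_in:
  assumes her: "hereditary C" and wf: "wf_graph G" and v: "v \<in> verts G"
  shows "induced G {v} \<in> C"
proof -
  have gc: "graph_class C" and hd: "\<And>H S. H \<in> C \<Longrightarrow> S \<subseteq> verts H \<Longrightarrow> induced H S \<in> C"
    using her unfolding hereditary_def by blast+
  have wfC: "\<And>H. H \<in> C \<Longrightarrow> wf_graph H" and ex: "\<exists>H\<in>C. verts H \<noteq> {}"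
    and isoC: "\<And>H H'. H \<in> C \<Longrightarrow> wf_graph H' \<Longrightarrow> graph_iso H H' \<Longrightarrow> H' \<in> C"
    using gc unfolding graph_class_def by blast+
  obtain H where H: "H \<in> C" "verts H \<noteq> {}" using ex by blast
  obtain w where w: "w \<in> verts H" using H by blast
  have I: "induced H {w} \<in> C" using hd[OF H(1)] w by simp
  have wfH: "wf_graph H" using wfC[OF H(1)] .
  have irr: "\<And>u. \<not> adj G u u" using wf unfolding wf_graph_def by blast
  have irrH: "\<And>u. \<not> adj H u u" using wfH unfolding wf_graph_def by blast
  have wf1: "wf_graph (induced G {v})" using wf irr unfolding wf_graph_def by simp
  have "bij_betw (\<lambda>_. v) {w} {v}" by (simp add: bij_betw_def)
  then have iso: "graph_iso (induced H {w}) (induced G {v})" unfolding graph_iso_def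
    using irr irrH by (intro exI[of _ "\<lambda>_. v"]) simp
  show ?thesis using isoC[OF I wf1 iso] .
qed

lemma module_single: "v \<in> verts G \<Longrightarrow> module G {v}"
  unfolding module_def by blast

lemma mpD: "modular_partition C G P \<Longrightarrow> partition_on (verts G) P"
  "modular_partition C G P \<Longrightarrow> X \<in> P \<Longrightarrow> module G X"
  "modular_partition C G P \<Longrightarrow> X \<in> P \<Longrightarrow> induced G X \<in> C"
  unfolding modular_partition_def by blast+

lemma children_eq: "c \<in> md_children G M \<Longrightarrow> c' \<in> md_children G M \<Longrightarrow> c \<subseteq> c' \<or> c' \<subseteq> c \<Longrightarrow> c = c'"
  using md_childrenD by blast

theorem theorem5:
  fixes C :: "'a graph set" and G :: "'a graph" and \<omega> :: nat
  assumes "hereditary C"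
    and "\<omega> \<in> mw ` C" and "\<forall>H\<in>C. mw H \<le> \<omega>"
    and "wf_graph G"
  shows "mw G \<le> max (mc C G) \<omega>"
proof -
  note her = assms(1) and wf = assms(4)
  have finV: "finite (verts G)" using wf unfolding wf_graph_def by blast
  have mP0: "modular_partition C G ((\<lambda>x. {x}) ` verts G)"
    unfolding modular_partition_def
  proof (intro conjI ballI)
    show "partition_on (verts G) ((\<lambda>x. {x}) ` verts G)" by (rule partition_on_singletons)
    fix X assume "X \<in> (\<lambda>x. {x}) ` verts G"
    then obtain v where v: "v \<in> verts G" "X = {v}" by blast
    then show "module G X" using module_single by simp
    show "induced G X \<in> C" using v singleton_in[OF her wf] by simp
  qed
  then have "\<exists>n P. modular_partition C G P \<and> card P = n" by blast
  then have "\<exists>P. modular_partition C G P \<and> card P = mc C G"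
    unfolding mc_def by (rule LeastI_ex[where P="\<lambda>n. \<exists>P. modular_partition C G P \<and> card P = n"])
  then obtain P where mP: "modular_partition C G P" and cP: "card P = mc C G" by blast
  have partP: "partition_on (verts G) P" using mpD(1)[OF mP] .
  have "P \<subseteq> Pow (verts G)" using partition_onD1[OF partP] by blast
  then have finP: "finite P" using finV finite_subset by blast
  show ?thesis
  proof (cases "mw G = 0")
    case True then show ?thesis by simp
  next
    case False
    have "mw G \<in> {card (md_children G M) | M. prime_node G M} \<union> {0}"
      unfolding mw_def using fin_mw[OF finV] by (intro Max_in) auto
    then obtain M where pM: "prime_node G M" and mwM: "mw G = card (md_children G M)" using False by auto
    have sM: "strong_module G M" using prime_strong[OF pM] .
    have V: "M \<subseteq> verts G" using module_sub[OF strong_mod[OF sM]] .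
    show ?thesis
    proof (cases "\<exists>X\<in>P. M \<subseteq> X")
      case True
      then obtain X where X: "X \<in> P" "M \<subseteq> X" by blast
      have "induced G X \<in> C" using mpD(3)[OF mP X(1)] .
      moreover have "\<And>H S. H \<in> C \<Longrightarrow> S \<subseteq> verts H \<Longrightarrow> induced H S \<in> C"
        using her unfolding hereditary_def by blast
      ultimately have "induced (induced G X) M \<in> C" using X(2) by simp
      then have IC: "induced G M \<in> C" using induced_induced[OF X(2)] by simp
      have "mw G \<le> mw (induced G M)"
        using mw_ge[of "induced G M" M] prime_induced[OF pM] children_induced[OF sM] V finV mwM
        by (simp add: finite_subset)
      also have "\<dots> \<le> \<omega>" using IC assms(3) by blast
      finally show ?thesis by simp
    next
      case False
      have sub: "\<exists>X. X \<in> P \<and> X \<subseteq> c" if c: "c \<in> md_children G M" for c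
      proof -
        have sc: "strong_module G c" and cM: "c \<subset> M" using md_childrenD(1)[OF c] by auto
        obtain v where v: "v \<in> c" using strong_ne[OF sc] by blast
        then have "v \<in> verts G" using cM V by blast
        then obtain X where X: "X \<in> P" "v \<in> X" using partition_onD1[OF partP] by blast
        have mX: "module G X" using mpD(2)[OF mP X(1)] .
        have "X \<inter> M \<noteq> {}" using X v cM by blast
        then have "X \<subseteq> M" using strongD[OF sM mX] False X by blast
        then have XM: "X \<subset> M" using False X by blast
        obtain c' where c': "c' \<in> md_children G M" "X \<subseteq> c'"
          using in_child[OF wf pM mX _ XM] X by blast
        have sc': "strong_module G c'" using md_childrenD(1)[OF c'(1)] by auto
        have "c' \<inter> c \<noteq> {}" using v X c' by blast
        then have "c \<subseteq> c' \<or> c' \<subseteq> c" using strongD[OF sc strong_mod[OF sc']] by blast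
        then have "c = c'" using children_eq c c'(1) by blast
        then show ?thesis using X c' by blast
      qed
      define g where "g c = (SOME X. X \<in> P \<and> X \<subseteq> c)" for c
      have g: "g c \<in> P \<and> g c \<subseteq> c" if "c \<in> md_children G M" for c
        using someI_ex[OF sub[OF that]] g_def by simp
      have "inj_on g (md_children G M)"
      proof (rule inj_onI)
        fix c c' assume c: "c \<in> md_children G M" and c': "c' \<in> md_children G M" and e: "g c = g c'"
        have "g c \<noteq> {}" using g[OF c] partition_onD3[OF partP] by metis
        then have ov: "c \<inter> c' \<noteq> {}" using g[OF c] g[OF c'] e by blast
        have sc: "strong_module G c" and sc': "strong_module G c'" using md_childrenD(1)[OF c] md_childrenD(1)[OF c'] by auto
        have "c \<subseteq> c' \<or> c' \<subseteq> c" using strongD[OF sc strong_mod[OF sc']] ov by blast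
        then show "c = c'" using children_eq c c' by blast
      qed
      then have "card (md_children G M) \<le> card P"
        using g finP by (intro card_inj_on_le) auto
      then show ?thesis using mwM cP by simp
    qed
  qed
qed

end
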